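(* Every linear SEM-UR satisfying bottleneck faithfulness also satisfies SEM-UR faithfulness (parts (a), (b1), (b2)). The converse fails: there is a linear SEM-UR satisfying SEM-UR faithfulness but violating bottleneck faithfulness (e.g. three latent $H_1,H_2,H_3$, four observed $X_1,\dots,X_4$, $\mathbf A=\mathbf 0$ and $\mathbf B=\begin{bmatrix}0&1&-1\\2&2&0\\3&3&0\\4&0&4\end{bmatrix}$).
   Context: Linear SEM-UR: observed $X_1,\dots,X_q$, latent $H_1,\dots,H_l$, $H=N_H$, $X=\mathbf BH+\mathbf AX+N_X$, $\mathbf A$ strictly lower triangular, independent noises; the causal diagram is the DAG with edge $H_i\to X_j$ of weight $b_{ji}$ iff $b_{ji}\ne0$ and $X_k\to X_j$ of weight $a_{jk}$ iff $a_{jk}\ne0$. Mixing matrix $\mathbf W^{UR}=[(\mathbf I-\mathbf A)^{-1}\mathbf B\;\;(\mathbf I-\mathbf A)^{-1}]$; its $(X_j,N_V)$ entry is the total causal effect of $V$ on $X_j$ (sum over directed paths of products of weights; $1$ if $V=X_j$). Bottleneck faithfulness: for sets $\mathcal J\subseteq\mathcal H\cup\mathcal X$ and $\mathcal K\subseteq\mathcal X$, a bottleneck from $\mathcal J$ to $\mathcal K$ is a set of variables meeting every directed path from an element of $\mathcal J$ to an element of $\mathcal K$, and a minimal bottleneck is one of smallest size. The model satisfies bottleneck faithfulness if for all such $\mathcal J,\mathcal K$ the rank of the submatrix $\mathbf W^{\mathcal J}_{\mathcal K}$ of total causal effects from the variables of $\mathcal J$ to those of $\mathcal K$ equals the size of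 a minimal bottleneck from $\mathcal J$ to $\mathcal K$. $Pa,Ch,De$: parents, children, descendants ($De(V)$ excludes $V$). $\mathrm{TC}(V,\mathcal V)$: vector of total causal effects of $V$ on the elements of $\mathcal V$. Possible children of $V_i$: $De(V_i)$ together with all latent $H\neq V_i$ with $Ch(H)\subseteq De(V_i)$. SEM-UR faithfulness: (a) the total causal effect of any observed or latent variable on any of its descendants is nonzero; (b1) for each $V_i$, $\mathrm{TC}(V_i,De(V_i))$ is not in the span of any $k\le|Ch(V_i)|$ vectors of $\{\mathrm{TC}(V,De(V_i)):V$ a possible child of $V_i\}$, except when $k=|Ch(V_i)|$ and every latent $H_l$ among them has $Ch(H_l)\subseteq Ch(V_i)$; (b2) if $V_i$ is latent then for each child $X_j$, $\mathrm{TC}(V_i,De(V_i)\setminus\{X_j\})$ is not in the span of any $k\le|Ch(X_j)\cup Ch(V_i)|-1$ vectors of $\{\mathrm{TC}(V,De(V_i)\setminus\{X_j\}):V$ a possible child of $X_j\}$, except when $k=|Ch(X_j)\cup Ch(V_i)|-1$ and every latent $H_l$ among them has $Ch(H_l)\subseteq Ch(X_j)\cup Ch(V_i)$. *)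

theory Defs
  imports Complex_Main
begin

text \<open>Variables of a linear SEM-UR: latent H i (i < l) and observed X j (j < q),
  indexed from 0.\<close>
datatype var = H nat | X nat

text \<open>A linear SEM-UR with q observed and l latent variables is given by the
  coefficient matrices A (q x q, strictly lower triangular) and B (q x l):
  X = B H + A X + N_X, H = N_H.\<close>
definition sem_ur :: "nat \<Rightarrow> nat \<Rightarrow> (nat \<Rightarrow> nat \<Rightarrow> real) \<Rightarrow> (nat \<Rightarrow> nat \<Rightarrow> real) \<Rightarrow> bool" where
  "sem_ur q l A B \<longleftrightarrow>
     (\<forall>j k. A j k \<noteq> 0 \<longrightarrow> k < j \<and> j < q) \<and>
     (\<forall>j i. B j i \<noteq> 0 \<longrightarrow> j < q \<and> i < l)"

definition vars :: "nat \<Rightarrow> nat \<Rightarrow> var set" where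
  "vars q l = {H i | i. i < l} \<union> {X j | j. j < q}"

definition latents :: "nat \<Rightarrow> var set" where
  "latents l = {H i | i. i < l}"

definition observed :: "nat \<Rightarrow> var set" where
  "observed q = {X j | j. j < q}"

fun weight :: "(nat \<Rightarrow> nat \<Rightarrow> real) \<Rightarrow> (nat \<Rightarrow> nat \<Rightarrow> real) \<Rightarrow> var \<Rightarrow> var \<Rightarrow> real" where
  "weight A B (H i) (X j) = B j i"
| "weight A B (X k) (X j) = A j k"
| "weight A B _ _ = 0"

definition edge :: "(nat \<Rightarrow> nat \<Rightarrow> real) \<Rightarrow> (nat \<Rightarrow> nat \<Rightarrow> real) \<Rightarrow> var \<Rightarrow> var \<Rightarrow> bool" where
  "edge A B u v \<longleftrightarrow> weight A B u v \<noteq> 0"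

text \<open>Directed paths from u to v, as nonempty vertex lists (the one-vertex list
  [u] is the trivial path from u to u).\<close>
definition dpaths :: "(nat \<Rightarrow> nat \<Rightarrow> real) \<Rightarrow> (nat \<Rightarrow> nat \<Rightarrow> real) \<Rightarrow> var \<Rightarrow> var \<Rightarrow> var list set" where
  "dpaths A B u v = {p. p \<noteq> [] \<and> hd p = u \<and> last p = v \<and>
      (\<forall>i. Suc i < length p \<longrightarrow> edge A B (p ! i) (p ! Suc i))}"

text \<open>Total causal effect of u on v: sum over directed paths of the product of
  the edge weights (equal to 1 for u = v, via the trivial path).\<close>
definition te :: "(nat \<Rightarrow> nat \<Rightarrow> real) \<Rightarrow> (nat \<Rightarrow> nat \<Rightarrow> real) \<Rightarrow> var \<Rightarrow> var \<Rightarrow> real" where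
  "te A B u v = (\<Sum>p\<in>dpaths A B u v. \<Prod>i<length p - 1. weight A B (p ! i) (p ! Suc i))"

definition Ch :: "(nat \<Rightarrow> nat \<Rightarrow> real) \<Rightarrow> (nat \<Rightarrow> nat \<Rightarrow> real) \<Rightarrow> var \<Rightarrow> var set" where
  "Ch A B u = {v. edge A B u v}"

definition De :: "(nat \<Rightarrow> nat \<Rightarrow> real) \<Rightarrow> (nat \<Rightarrow> nat \<Rightarrow> real) \<Rightarrow> var \<Rightarrow> var set" where
  "De A B u = {v. v \<noteq> u \<and> dpaths A B u v \<noteq> {}}"

definition possible_children :: "nat \<Rightarrow> (nat \<Rightarrow> nat \<Rightarrow> real) \<Rightarrow> (nat \<Rightarrow> nat \<Rightarrow> real) \<Rightarrow> var \<Rightarrow> var set" where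
  "possible_children l A B u =
     De A B u \<union> {h. h \<in> latents l \<and> h \<noteq> u \<and> Ch A B h \<subseteq> De A B u}"

definition TC :: "(nat \<Rightarrow> nat \<Rightarrow> real) \<Rightarrow> (nat \<Rightarrow> nat \<Rightarrow> real) \<Rightarrow> var \<Rightarrow> var set \<Rightarrow> var \<Rightarrow> real" where
  "TC A B u S = (\<lambda>v. if v \<in> S then te A B u v else 0)"

definition in_span :: "(var \<Rightarrow> real) \<Rightarrow> var set \<Rightarrow> (var \<Rightarrow> var \<Rightarrow> real) \<Rightarrow> bool" where
  "in_span v S f \<longleftrightarrow> (\<exists>c. v = (\<lambda>w. \<Sum>s\<in>S. c s * f s w))"

definition bottleneck :: "(nat \<Rightarrow> nat \<Rightarrow> real) \<Rightarrow> (nat \<Rightarrow> nat \<Rightarrow> real) \<Rightarrow> var set \<Rightarrow> var set \<Rightarrow> var set \<Rightarrow> bool" where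
  "bottleneck A B J K S \<longleftrightarrow>
     (\<forall>u\<in>J. \<forall>v\<in>K. \<forall>p\<in>dpaths A B u v. set p \<inter> S \<noteq> {})"

definition min_bottleneck_size :: "nat \<Rightarrow> nat \<Rightarrow> (nat \<Rightarrow> nat \<Rightarrow> real) \<Rightarrow> (nat \<Rightarrow> nat \<Rightarrow> real) \<Rightarrow> var set \<Rightarrow> var set \<Rightarrow> nat" where
  "min_bottleneck_size q l A B J K =
     (LEAST n. \<exists>S. S \<subseteq> vars q l \<and> card S = n \<and> bottleneck A B J K S)"

definition cols_independent :: "(nat \<Rightarrow> nat \<Rightarrow> real) \<Rightarrow> (nat \<Rightarrow> nat \<Rightarrow> real) \<Rightarrow> var set \<Rightarrow> var set \<Rightarrow> bool" where
  "cols_independent A B J K \<longleftrightarrow>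
     (\<forall>c. (\<forall>v\<in>K. (\<Sum>u\<in>J. c u * te A B u v) = 0) \<longrightarrow> (\<forall>u\<in>J. c u = 0))"

definition rank_sub :: "(nat \<Rightarrow> nat \<Rightarrow> real) \<Rightarrow> (nat \<Rightarrow> nat \<Rightarrow> real) \<Rightarrow> var set \<Rightarrow> var set \<Rightarrow> nat" where
  "rank_sub A B J K = Max {card J' | J'. J' \<subseteq> J \<and> cols_independent A B J' K}"

definition bottleneck_faithful :: "nat \<Rightarrow> nat \<Rightarrow> (nat \<Rightarrow> nat \<Rightarrow> real) \<Rightarrow> (nat \<Rightarrow> nat \<Rightarrow> real) \<Rightarrow> bool" where
  "bottleneck_faithful q l A B \<longleftrightarrow>
     (\<forall>J K. J \<subseteq> vars q l \<longrightarrow> K \<subseteq> observed q \<longrightarrow>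
        rank_sub A B J K = min_bottleneck_size q l A B J K)"

definition faithful_a :: "nat \<Rightarrow> nat \<Rightarrow> (nat \<Rightarrow> nat \<Rightarrow> real) \<Rightarrow> (nat \<Rightarrow> nat \<Rightarrow> real) \<Rightarrow> bool" where
  "faithful_a q l A B \<longleftrightarrow>
     (\<forall>u\<in>vars q l. \<forall>v\<in>De A B u. te A B u v \<noteq> 0)"

definition faithful_b1 :: "nat \<Rightarrow> nat \<Rightarrow> (nat \<Rightarrow> nat \<Rightarrow> real) \<Rightarrow> (nat \<Rightarrow> nat \<Rightarrow> real) \<Rightarrow> bool" where
  "faithful_b1 q l A B \<longleftrightarrow>
     (\<forall>u\<in>vars q l. \<forall>S. S \<subseteq> possible_children l A B u \<longrightarrow>
        card S \<le> card (Ch A B u) \<longrightarrow>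
        \<not> (card S = card (Ch A B u) \<and>
             (\<forall>h\<in>S \<inter> latents l. Ch A B h \<subseteq> Ch A B u)) \<longrightarrow>
        \<not> in_span (TC A B u (De A B u)) S (\<lambda>s. TC A B s (De A B u)))"

definition faithful_b2 :: "nat \<Rightarrow> nat \<Rightarrow> (nat \<Rightarrow> nat \<Rightarrow> real) \<Rightarrow> (nat \<Rightarrow> nat \<Rightarrow> real) \<Rightarrow> bool" where
  "faithful_b2 q l A B \<longleftrightarrow>
     (\<forall>u\<in>latents l. \<forall>x\<in>Ch A B u. \<forall>S.
        S \<subseteq> possible_children l A B x \<longrightarrow>
        card S \<le> card (Ch A B x \<union> Ch A B u) - 1 \<longrightarrow>
        \<not> (card S = card (Ch A B x \<union> Ch A B u) - 1 \<and>
             (\<forall>h\<in>S \<inter> latents l. Ch A B h \<subseteq> Ch A B x \<union> Ch A B u)) \<longrightarrow>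
        \<not> in_span (TC A B u (De A B u - {x})) S (\<lambda>s. TC A B s (De A B u - {x})))"

definition semur_faithful :: "nat \<Rightarrow> nat \<Rightarrow> (nat \<Rightarrow> nat \<Rightarrow> real) \<Rightarrow> (nat \<Rightarrow> nat \<Rightarrow> real) \<Rightarrow> bool" where
  "semur_faithful q l A B \<longleftrightarrow> faithful_a q l A B \<and> faithful_b1 q l A B \<and> faithful_b2 q l A B"

end

theory Submission
  imports Defs
begin


lemma indep_empty: "cols_independent A B {} K"
  by (simp add: cols_independent_def)

lemma rank_set_fin:
  assumes "finite J"
  shows "finite {card J' | J'. J' \<subseteq> J \<and> cols_independent A B J' K}"
        "{card J' | J'. J' \<subseteq> J \<and> cols_independent A B J' K} \<noteq> {}"
proof -
  have "{card J' | J'. J' \<subseteq> J \<and> cols_independent A B J' K} \<subseteq> {0..card J}"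
    using assms by (auto intro: card_mono)
  then show "finite {card J' | J'. J' \<subseteq> J \<and> cols_independent A B J' K}"
    using finite_subset by blast
  show "{card J' | J'. J' \<subseteq> J \<and> cols_independent A B J' K} \<noteq> {}"
    using indep_empty by blast
qed

lemma rank_ge:
  assumes "finite J" "J' \<subseteq> J" "cols_independent A B J' K"
  shows "card J' \<le> rank_sub A B J K"
  unfolding rank_sub_def using rank_set_fin[OF assms(1)] assms by (intro Max_ge) auto

lemma rank_attained:
  assumes "finite J"
  shows "\<exists>J'. J' \<subseteq> J \<and> cols_independent A B J' K \<and> card J' = rank_sub A B J K"
proof -
  have "rank_sub A B J K \<in> {card J' | J'. J' \<subseteq> J \<and> cols_independent A B J' K}"
    unfolding rank_sub_def using rank_set_fin[OF assms] by (rule Max_in)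
  then show ?thesis by auto
qed

lemma indep_subset:
  assumes "finite J2" "J1 \<subseteq> J2" "cols_independent A B J2 K"
  shows "cols_independent A B J1 K"
  unfolding cols_independent_def
proof (intro allI impI)
  fix c assume h: "\<forall>v\<in>K. (\<Sum>u\<in>J1. c u * te A B u v) = 0"
  define c' where "c' = (\<lambda>x. if x \<in> J1 then c x else 0)"
  have "\<forall>v\<in>K. (\<Sum>u\<in>J2. c' u * te A B u v) = 0"
  proof
    fix v assume v: "v \<in> K"
    have "(\<Sum>u\<in>J2. c' u * te A B u v) = (\<Sum>u\<in>J1. c' u * te A B u v)"
      using assms(1,2) by (intro sum.mono_neutral_right) (auto simp: c'_def)
    also have "\<dots> = (\<Sum>u\<in>J1. c u * te A B u v)" by (simp add: c'_def)
    finally show "(\<Sum>u\<in>J2. c' u * te A B u v) = 0" using h v by simp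
  qed
  then have "\<forall>u\<in>J2. c' u = 0" using assms(3) unfolding cols_independent_def by blast
  then show "\<forall>u\<in>J1. c u = 0" using assms(2) unfolding c'_def by (metis subsetD)
qed

lemma indep_extend:
  assumes "finite I" "s \<notin> I" "cols_independent A B I K" "\<not> cols_independent A B (insert s I) K"
  shows "\<exists>d. \<forall>v\<in>K. te A B s v = (\<Sum>t\<in>I. d t * te A B t v)"
proof -
  obtain c where c0: "\<forall>v\<in>K. (\<Sum>u\<in>insert s I. c u * te A B u v) = 0"
    and cn: "\<exists>u\<in>insert s I. c u \<noteq> 0"
    using assms(4) unfolding cols_independent_def by blast
  have sum_eq: "\<And>v. (\<Sum>u\<in>insert s I. c u * te A B u v) = c s * te A B s v + (\<Sum>u\<in>I. c u * te A B u v)"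
    using assms(1,2) by simp
  have cs: "c s \<noteq> 0"
  proof
    assume "c s = 0"
    then have "\<forall>v\<in>K. (\<Sum>u\<in>I. c u * te A B u v) = 0" using c0 sum_eq by simp
    then have "\<forall>u\<in>I. c u = 0" using assms(3) unfolding cols_independent_def by blast
    then show False using cn \<open>c s = 0\<close> by auto
  qed
  show ?thesis
  proof (intro exI ballI)
    fix v assume v: "v \<in> K"
    have "c s * te A B s v = - (\<Sum>u\<in>I. c u * te A B u v)" using c0 v sum_eq by (simp add: eq_neg_iff_add_eq_0)
    then have "te A B s v = - (\<Sum>u\<in>I. c u * te A B u v) / c s" using cs by (simp add: field_simps)
    also have "\<dots> = (\<Sum>t\<in>I. (- c t / c s) * te A B t v)"
      by (simp add: sum_divide_distrib sum_negf)
    finally show "te A B s v = (\<Sum>t\<in>I. (- c t / c s) * te A B t v)" .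
  qed
qed

lemma rank_insert_span:
  assumes fin: "finite S" and uS: "u \<notin> S"
    and sp: "\<forall>v\<in>K. te A B u v = (\<Sum>s\<in>S. c s * te A B s v)"
  shows "rank_sub A B (insert u S) K \<le> rank_sub A B S K"
proof -
  obtain J' where J': "J' \<subseteq> insert u S" "cols_independent A B J' K"
      "card J' = rank_sub A B (insert u S) K"
    using rank_attained[of "insert u S" A B K] fin by blast
  show ?thesis
  proof (cases "u \<in> J'")
    case False
    then have "J' \<subseteq> S" using J' by auto
    then show ?thesis using rank_ge[OF fin _ J'(2)] J'(3) by simp
  next
    case True
    define I where "I = J' - {u}"
    have IS: "I \<subseteq> S" using J' by (auto simp: I_def)
    have finI: "finite I" using IS fin finite_subset by blast
    have finJ': "finite J'" using J'(1) fin finite_subset by blast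
    have indI: "cols_independent A B I K" using indep_subset[OF finJ' _ J'(2)] by (auto simp: I_def)
    have J'I: "J' = insert u I" "u \<notin> I" using True by (auto simp: I_def)
    have cardJ': "card J' = Suc (card I)" using J'I finI by simp
    have cI: "card I \<le> rank_sub A B S K" using rank_ge[OF fin IS indI] .
    show ?thesis
    proof (rule ccontr)
      assume "\<not> ?thesis"
      then have cI': "card I = rank_sub A B S K" using cI cardJ' J'(3) by simp
      have "\<forall>s\<in>S. \<exists>d. \<forall>v\<in>K. te A B s v = (\<Sum>t\<in>I. d t * te A B t v)"
      proof
        fix s assume s: "s \<in> S"
        show "\<exists>d. \<forall>v\<in>K. te A B s v = (\<Sum>t\<in>I. d t * te A B t v)"
        proof (cases "s \<in> I")
          case True
          show ?thesis
          proof (intro exI ballI)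
            fix v
            have "(\<Sum>t\<in>I. (if t = s then 1 else 0) * te A B t v) = (\<Sum>t\<in>I. if t = s then te A B t v else 0)"
              by (rule sum.cong) auto
            also have "\<dots> = te A B s v" using True finI by (simp add: sum.delta)
            finally show "te A B s v = (\<Sum>t\<in>I. (if t = s then 1 else 0) * te A B t v)" by simp
          qed
        next
          case False
          have "\<not> cols_independent A B (insert s I) K"
          proof
            assume "cols_independent A B (insert s I) K"
            then have "card (insert s I) \<le> rank_sub A B S K" using rank_ge[OF fin] IS s by auto
            then show False using cI' False finI by simp
          qed
          then show ?thesis using indep_extend[OF finI False indI] by blast
        qed
      qed
      then obtain D where D: "\<forall>s\<in>S. \<forall>v\<in>K. te A B s v = (\<Sum>t\<in>I. D s t * te A B t v)"
        by metis
      define e where "e = (\<lambda>t. if t = u then 1 else - (\<Sum>s\<in>S. c s * D s t))"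
      have "\<forall>v\<in>K. (\<Sum>x\<in>J'. e x * te A B x v) = 0"
      proof
        fix v assume v: "v \<in> K"
        have "te A B u v = (\<Sum>s\<in>S. c s * (\<Sum>t\<in>I. D s t * te A B t v))"
          using sp v D by simp
        also have "\<dots> = (\<Sum>t\<in>I. (\<Sum>s\<in>S. c s * D s t) * te A B t v)"
          by (simp add: sum_distrib_left sum_distrib_right sum.swap[of _ S] mult.assoc)
        finally have eq: "te A B u v = (\<Sum>t\<in>I. (\<Sum>s\<in>S. c s * D s t) * te A B t v)" .
        have "(\<Sum>x\<in>J'. e x * te A B x v) = e u * te A B u v + (\<Sum>x\<in>I. e x * te A B x v)"
          using J'I finI by simp
        also have "(\<Sum>x\<in>I. e x * te A B x v) = - (\<Sum>t\<in>I. (\<Sum>s\<in>S. c s * D s t) * te A B t v)"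
          unfolding sum_negf[symmetric] using J'I(2) by (intro sum.cong) (auto simp: e_def)
        finally show "(\<Sum>x\<in>J'. e x * te A B x v) = 0" using eq by (simp add: e_def)
      qed
      then have "\<forall>x\<in>J'. e x = 0" using J'(2) unfolding cols_independent_def by blast
      then have "e u = 0" using True by blast
      then show False by (simp add: e_def)
    qed
  qed
qed



fun ordv :: "var \<Rightarrow> int" where "ordv (H i) = -1" | "ordv (X j) = int j"

lemma edge_ord:
  assumes "sem_ur q l A B" "edge A B u v"
  shows "ordv u < ordv v \<and> (\<exists>j<q. v = X j)"
  using assms by (cases u; cases v) (auto simp: edge_def sem_ur_def)

lemma dp_hd: "p \<in> dpaths A B u v \<Longrightarrow> p ! 0 = u"
  by (auto simp: dpaths_def hd_conv_nth)

lemma dp_last: "p \<in> dpaths A B u v \<Longrightarrow> p ! (length p - 1) = v"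
  by (auto simp: dpaths_def last_conv_nth)

lemma dp_ne: "p \<in> dpaths A B u v \<Longrightarrow> p \<noteq> []"
  by (auto simp: dpaths_def)

lemma dp_edge: "p \<in> dpaths A B u v \<Longrightarrow> Suc i < length p \<Longrightarrow> edge A B (p ! i) (p ! Suc i)"
  by (auto simp: dpaths_def)

lemma path_ord:
  assumes "sem_ur q l A B" "p \<in> dpaths A B u v" "i < j" "j < length p"
  shows "ordv (p ! i) < ordv (p ! j)"
  using assms(3,4)
proof (induction j)
  case 0 then show ?case by simp
next
  case (Suc j)
  have e: "ordv (p ! j) < ordv (p ! Suc j)"
    using edge_ord[OF assms(1) dp_edge[OF assms(2)]] Suc.prems by blast
  show ?case
  proof (cases "i = j")
    case True then show ?thesis using e by simp
  next
    case False then show ?thesis using Suc e by simp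
  qed
qed

lemma path_ord_le:
  assumes "sem_ur q l A B" "p \<in> dpaths A B u v" "i \<le> j" "j < length p"
  shows "ordv (p ! i) \<le> ordv (p ! j)"
  using path_ord[OF assms(1,2) _ assms(4), of i] assms(3) by (cases "i = j") auto

lemma path_obs:
  assumes "sem_ur q l A B" "p \<in> dpaths A B u v" "0 < i" "i < length p"
  shows "\<exists>j<q. p ! i = X j"
proof -
  obtain k where k: "i = Suc k" using assms(3) by (cases i) auto
  show ?thesis using edge_ord[OF assms(1) dp_edge[OF assms(2), of k]] assms(4) k by auto
qed

lemma De_props:
  assumes "sem_ur q l A B" "v \<in> De A B u"
  shows "ordv u < ordv v \<and> (\<exists>j<q. v = X j)"
proof -
  obtain p where p: "p \<in> dpaths A B u v" and vu: "v \<noteq> u" using assms(2) by (auto simp: De_def)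
  have len: "length p \<ge> 2"
  proof (rule ccontr)
    assume "\<not> ?thesis"
    then have "length p = 1" using dp_ne[OF p] by (cases p) (auto simp: not_le)
    then show False using dp_hd[OF p] dp_last[OF p] vu by simp
  qed
  have "ordv (p ! 0) < ordv (p ! (length p - 1))" using path_ord[OF assms(1) p] len by simp
  moreover have "\<exists>j<q. p ! (length p - 1) = X j" using path_obs[OF assms(1) p] len by simp
  ultimately show ?thesis using dp_hd[OF p] dp_last[OF p] by simp
qed

lemma path1: "[u] \<in> dpaths A B u u"
  by (auto simp: dpaths_def)

lemma path2: "edge A B u v \<Longrightarrow> [u, v] \<in> dpaths A B u v"
  by (auto simp: dpaths_def less_Suc_eq)

lemma path_cons:
  assumes "edge A B u x" "p \<in> dpaths A B x v"
  shows "u # p \<in> dpaths A B u v"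
proof -
  have ne: "p \<noteq> []" using dp_ne[OF assms(2)] .
  have "\<forall>i. Suc i < length (u # p) \<longrightarrow> edge A B ((u # p) ! i) ((u # p) ! Suc i)"
  proof (intro allI impI)
    fix i assume i: "Suc i < length (u # p)"
    show "edge A B ((u # p) ! i) ((u # p) ! Suc i)"
    proof (cases i)
      case 0 then show ?thesis using assms dp_hd[OF assms(2)] by simp
    next
      case (Suc k) then show ?thesis using dp_edge[OF assms(2), of k] i by simp
    qed
  qed
  then show ?thesis using assms(2) ne by (auto simp: dpaths_def)
qed

lemma edge_De: "sem_ur q l A B \<Longrightarrow> edge A B u v \<Longrightarrow> v \<in> De A B u"
  using edge_ord[of q l A B u v] path2[of A B u v] by (auto simp: De_def)

lemma Ch_De: "sem_ur q l A B \<Longrightarrow> Ch A B u \<subseteq> De A B u"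
  using edge_De by (auto simp: Ch_def)

lemma De_trans:
  assumes "sem_ur q l A B" "edge A B u x" "c \<in> De A B x"
  shows "c \<in> De A B u"
proof -
  obtain p where p: "p \<in> dpaths A B x c" using assms(3) by (auto simp: De_def)
  have "ordv u < ordv x" using edge_ord[OF assms(1,2)] by simp
  moreover have "ordv x < ordv c" using De_props[OF assms(1,3)] by simp
  ultimately have "c \<noteq> u" by auto
  then show ?thesis using path_cons[OF assms(2) p] by (auto simp: De_def)
qed

lemma finite_vars: "finite (vars q l)"
proof -
  have "vars q l = H ` {..<l} \<union> X ` {..<q}" by (auto simp: vars_def)
  then show ?thesis by simp
qed

lemma De_obs: "sem_ur q l A B \<Longrightarrow> De A B u \<subseteq> observed q"
  using De_props by (fastforce simp: observed_def)

lemma Ch_obs: "sem_ur q l A B \<Longrightarrow> Ch A B u \<subseteq> observed q"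
  using De_obs Ch_De by blast

lemma obs_vars: "observed q \<subseteq> vars q l" by (auto simp: observed_def vars_def)
lemma lat_vars: "latents l \<subseteq> vars q l" by (auto simp: latents_def vars_def)

lemma finite_Ch: "sem_ur q l A B \<Longrightarrow> finite (Ch A B u)"
  using Ch_obs obs_vars finite_vars finite_subset by metis

lemma PC_vars: "sem_ur q l A B \<Longrightarrow> possible_children l A B u \<subseteq> vars q l"
  using De_obs obs_vars lat_vars by (fastforce simp: possible_children_def)

lemma obs_not_lat: "v \<in> observed q \<Longrightarrow> v \<notin> latents l"
  by (auto simp: observed_def latents_def)

lemma not_on_path:
  assumes sem: "sem_ur q l A B" and s: "s \<in> possible_children l A B x" and p: "p \<in> dpaths A B s v"
  shows "x \<notin> set p"
proof
  assume "x \<in> set p"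
  then obtain i where i: "i < length p" "p ! i = x" by (auto simp: in_set_conv_nth)
  show False
  proof (cases i)
    case 0
    then have "s = x" using i dp_hd[OF p] by simp
    then show False using s by (auto simp: possible_children_def De_def)
  next
    case (Suc k)
    have lp: "1 < length p" using i Suc by simp
    show False
    proof (cases "s \<in> De A B x")
      case True
      have "ordv x < ordv s" using De_props[OF sem True] by simp
      moreover have "ordv (p ! 0) < ordv (p ! i)" using path_ord[OF sem p, of 0 i] i Suc by simp
      ultimately show False using i dp_hd[OF p] by simp
    next
      case False
      then have ChS: "Ch A B s \<subseteq> De A B x" using s by (auto simp: possible_children_def)
      have "edge A B (p ! 0) (p ! 1)" using dp_edge[OF p, of 0] lp by simp
      then have "p ! 1 \<in> De A B x" using ChS dp_hd[OF p] by (auto simp: Ch_def)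
      then have "ordv x < ordv (p ! 1)" using De_props[OF sem] by simp
      moreover have "ordv (p ! 1) \<le> ordv (p ! i)" using path_ord_le[OF sem p, of 1 i] i Suc by simp
      ultimately show False using i by simp
    qed
  qed
qed

lemma lat_not_on_path:
  assumes sem: "sem_ur q l A B" and u: "u \<in> latents l" and su: "s \<noteq> u" and p: "p \<in> dpaths A B s v"
  shows "u \<notin> set p"
proof
  assume "u \<in> set p"
  then obtain i where i: "i < length p" "p ! i = u" by (auto simp: in_set_conv_nth)
  show False
  proof (cases i)
    case 0 then show False using i dp_hd[OF p] su by simp
  next
    case (Suc k)
    then show False using path_obs[OF sem p, of i] i u by (auto simp: latents_def)
  qed
qed

lemma bn_self: "bottleneck A B J K J"
  by (auto simp: bottleneck_def dpaths_def) (metis list.set_sel(1) disjoint_iff)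

lemma mb_le: "T \<subseteq> vars q l \<Longrightarrow> bottleneck A B J K T \<Longrightarrow> min_bottleneck_size q l A B J K \<le> card T"
  unfolding min_bottleneck_size_def by (rule Least_le) blast

lemma mb_attained:
  assumes "J \<subseteq> vars q l"
  shows "\<exists>T. T \<subseteq> vars q l \<and> card T = min_bottleneck_size q l A B J K \<and> bottleneck A B J K T"
  unfolding min_bottleneck_size_def
  by (rule LeastI_ex) (use assms bn_self in blast)

lemma bn_remove:
  assumes "bottleneck A B J K T" "J' \<subseteq> J" "\<forall>s\<in>J'. \<forall>v\<in>K. \<forall>p\<in>dpaths A B s v. y \<notin> set p"
  shows "bottleneck A B J' K (T - {y})"
  using assms unfolding bottleneck_def by blast

lemma bn_faith:
  "bottleneck_faithful q l A B \<Longrightarrow> J \<subseteq> vars q l \<Longrightarrow> K \<subseteq> observed q \<Longrightarrow>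
   rank_sub A B J K = min_bottleneck_size q l A B J K"
  by (simp add: bottleneck_faithful_def)



lemma part_a:
  assumes sem: "sem_ur q l A B" and bf: "bottleneck_faithful q l A B"
  shows "faithful_a q l A B"
  unfolding faithful_a_def
proof (intro ballI)
  fix u v assume u: "u \<in> vars q l" and v: "v \<in> De A B u"
  have K: "{v} \<subseteq> observed q" using De_obs[OF sem] v by blast
  have J: "{u} \<subseteq> vars q l" using u by simp
  have eq: "rank_sub A B {u} {v} = min_bottleneck_size q l A B {u} {v}" using bn_faith[OF bf J K] .
  obtain T where T: "T \<subseteq> vars q l" "card T = min_bottleneck_size q l A B {u} {v}" "bottleneck A B {u} {v} T"
    using mb_attained[OF J] by blast
  have "T \<noteq> {}"
  proof
    assume "T = {}"
    obtain p where "p \<in> dpaths A B u v" using v by (auto simp: De_def)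
    then show False using T(3) \<open>T = {}\<close> by (auto simp: bottleneck_def)
  qed
  moreover have "finite T" using T(1) finite_vars finite_subset by blast
  ultimately have "card T \<noteq> 0" by simp
  then have r1: "rank_sub A B {u} {v} \<noteq> 0" using eq T(2) by simp
  obtain J' where J': "J' \<subseteq> {u}" "cols_independent A B J' {v}" "card J' = rank_sub A B {u} {v}"
    using rank_attained[of "{u}" A B "{v}"] by blast
  have "J' = {u}" using J'(1,3) r1 by (auto simp: subset_singleton_iff)
  then have ind: "cols_independent A B {u} {v}" using J'(2) by simp
  show "te A B u v \<noteq> 0"
  proof
    assume "te A B u v = 0"
    then have "\<forall>x\<in>{u}. (\<lambda>_. 1::real) x = 0"
      using ind[unfolded cols_independent_def, rule_format, of "\<lambda>_. 1"] by simp
    then show False by simp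
  qed
qed

lemma span_te:
  assumes "in_span (TC A B u K) S (\<lambda>s. TC A B s K)"
  shows "\<exists>c. \<forall>v\<in>K. te A B u v = (\<Sum>s\<in>S. c s * te A B s v)"
proof -
  obtain c where c: "TC A B u K = (\<lambda>w. \<Sum>s\<in>S. c s * TC A B s K w)"
    using assms by (auto simp: in_span_def)
  show ?thesis
  proof (intro exI ballI)
    fix v assume v: "v \<in> K"
    have "TC A B u K v = (\<Sum>s\<in>S. c s * TC A B s K v)" using c by (rule fun_cong)
    then show "te A B u v = (\<Sum>s\<in>S. c s * te A B s v)" using v by (simp add: TC_def)
  qed
qed

lemma span_contra:
  assumes sem: "sem_ur q l A B" and bf: "bottleneck_faithful q l A B"
    and S: "S \<subseteq> vars q l" and u: "u \<in> vars q l" and uS: "u \<notin> S" and K: "K \<subseteq> observed q"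
    and sp: "in_span (TC A B u K) S (\<lambda>s. TC A B s K)"
    and big: "min_bottleneck_size q l A B S K < min_bottleneck_size q l A B (insert u S) K"
  shows False
proof -
  obtain c where c: "\<forall>v\<in>K. te A B u v = (\<Sum>s\<in>S. c s * te A B s v)" using span_te[OF sp] by blast
  have finS: "finite S" using S finite_vars finite_subset by blast
  have "rank_sub A B (insert u S) K \<le> rank_sub A B S K" using rank_insert_span[OF finS uS c] .
  moreover have "rank_sub A B S K = min_bottleneck_size q l A B S K" using bn_faith[OF bf S K] .
  moreover have "rank_sub A B (insert u S) K = min_bottleneck_size q l A B (insert u S) K"
    using bn_faith[OF bf _ K] S u by simp
  ultimately show False using big by simp
qed

lemma part_b1:
  assumes sem: "sem_ur q l A B" and bf: "bottleneck_faithful q l A B"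
  shows "faithful_b1 q l A B"
  unfolding faithful_b1_def
proof (intro ballI allI impI notI)
  fix u S
  assume u: "u \<in> vars q l" and SP: "S \<subseteq> possible_children l A B u"
    and cS: "card S \<le> card (Ch A B u)"
    and nex: "\<not> (card S = card (Ch A B u) \<and> (\<forall>h\<in>S \<inter> latents l. Ch A B h \<subseteq> Ch A B u))"
    and sp: "in_span (TC A B u (De A B u)) S (\<lambda>s. TC A B s (De A B u))"
  define K where "K = De A B u"
  have Svars: "S \<subseteq> vars q l" using SP PC_vars[OF sem] by blast
  have finS: "finite S" using Svars finite_vars finite_subset by blast
  have uS: "u \<notin> S" using SP by (auto simp: possible_children_def De_def)
  have Kobs: "K \<subseteq> observed q" using De_obs[OF sem] by (simp add: K_def)
  have mbS: "min_bottleneck_size q l A B S K \<le> card S" using mb_le[OF Svars bn_self] .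
  obtain T where T: "T \<subseteq> vars q l" "card T = min_bottleneck_size q l A B (insert u S) K"
      "bottleneck A B (insert u S) K T"
    using mb_attained[of "insert u S" q l A B K] Svars u by auto
  have finT: "finite T" using T(1) finite_vars finite_subset by blast
  have big: "min_bottleneck_size q l A B S K < card T"
  proof (cases "u \<in> T")
    case True
    have "bottleneck A B S K (T - {u})"
    proof (rule bn_remove[OF T(3)])
      show "\<forall>s\<in>S. \<forall>v\<in>K. \<forall>p\<in>dpaths A B s v. u \<notin> set p"
      proof (intro ballI)
        fix s v p assume "s \<in> S" "v \<in> K" "p \<in> dpaths A B s v"
        then show "u \<notin> set p" using not_on_path[OF sem, of s u p] SP by blast
      qed
    qed auto
    then have "min_bottleneck_size q l A B S K \<le> card (T - {u})" using mb_le T(1) by blast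
    then show ?thesis using card_Diff1_less[OF finT True] by linarith
  next
    case False
    have ChT: "Ch A B u \<subseteq> T"
    proof
      fix c assume c: "c \<in> Ch A B u"
      then have "c \<in> K" using Ch_De[OF sem] K_def by blast
      moreover have "[u, c] \<in> dpaths A B u c" using c path2 by (auto simp: Ch_def)
      moreover have "\<forall>v\<in>K. \<forall>p\<in>dpaths A B u v. set p \<inter> T \<noteq> {}"
        using T(3) by (simp add: bottleneck_def)
      ultimately have "set [u, c] \<inter> T \<noteq> {}" by blast
      then show "c \<in> T" using False by auto
    qed
    then have cCT: "card (Ch A B u) \<le> card T" using finT card_mono by blast
    show ?thesis
    proof (rule ccontr)
      assume "\<not> ?thesis"
      then have eqs: "card S = card (Ch A B u)" "card T = card (Ch A B u)" using mbS cS cCT by linarith+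
      have TCh: "T = Ch A B u" using card_subset_eq[OF finT ChT] eqs(2) by simp
      obtain h where h: "h \<in> S" "h \<in> latents l" "\<not> Ch A B h \<subseteq> Ch A B u" using nex eqs(1) by blast
      obtain c where c: "c \<in> Ch A B h" "c \<notin> Ch A B u" using h(3) by blast
      have "h \<notin> De A B u" using h(2) De_obs[OF sem] obs_not_lat by blast
      then have "Ch A B h \<subseteq> De A B u" using h(1) SP by (auto simp: possible_children_def)
      then have cK: "c \<in> K" using c K_def by blast
      have "[h, c] \<in> dpaths A B h c" using c path2 by (auto simp: Ch_def)
      moreover have "\<forall>v\<in>K. \<forall>p\<in>dpaths A B h v. set p \<inter> T \<noteq> {}"
        using T(3) h(1) by (simp add: bottleneck_def)
      ultimately have "set [h, c] \<inter> T \<noteq> {}" using cK by blast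
      moreover have "h \<notin> T" using TCh Ch_obs[OF sem] h(2) obs_not_lat by blast
      ultimately show False using c(2) TCh by auto
    qed
  qed
  show False
    by (rule span_contra[OF sem bf Svars u uS Kobs]) (use sp big T(2) K_def in auto)
qed

lemma part_b2:
  assumes sem: "sem_ur q l A B" and bf: "bottleneck_faithful q l A B"
  shows "faithful_b2 q l A B"
  unfolding faithful_b2_def
proof (intro ballI allI impI notI)
  fix u x S
  assume ul: "u \<in> latents l" and x: "x \<in> Ch A B u" and SP: "S \<subseteq> possible_children l A B x"
    and cS: "card S \<le> card (Ch A B x \<union> Ch A B u) - 1"
    and nex: "\<not> (card S = card (Ch A B x \<union> Ch A B u) - 1 \<and>
             (\<forall>h\<in>S \<inter> latents l. Ch A B h \<subseteq> Ch A B x \<union> Ch A B u))"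
    and sp: "in_span (TC A B u (De A B u - {x})) S (\<lambda>s. TC A B s (De A B u - {x}))"
  define K where "K = De A B u - {x}"
  have u: "u \<in> vars q l" using ul lat_vars by blast
  have exu: "edge A B u x" using x by (simp add: Ch_def)
  have Svars: "S \<subseteq> vars q l" using SP PC_vars[OF sem] by blast
  have finS: "finite S" using Svars finite_vars finite_subset by blast
  have xDe: "x \<notin> De A B x" by (simp add: De_def)
  have uS: "u \<notin> S"
  proof
    assume "u \<in> S"
    then have "u \<in> possible_children l A B x" using SP by blast
    moreover have "u \<notin> De A B x" using ul De_obs[OF sem] obs_not_lat by blast
    ultimately have "Ch A B u \<subseteq> De A B x" by (auto simp: possible_children_def)
    then show False using x xDe by blast
  qed
  have Kobs: "K \<subseteq> observed q" using De_obs[OF sem] by (auto simp: K_def)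
  have mbS: "min_bottleneck_size q l A B S K \<le> card S" using mb_le[OF Svars bn_self] .
  obtain T where T: "T \<subseteq> vars q l" "card T = min_bottleneck_size q l A B (insert u S) K"
      "bottleneck A B (insert u S) K T"
    using mb_attained[of "insert u S" q l A B K] Svars u by auto
  have finT: "finite T" using T(1) finite_vars finite_subset by blast
  have big: "min_bottleneck_size q l A B S K < card T"
  proof (cases "u \<in> T")
    case True
    have "bottleneck A B S K (T - {u})"
    proof (rule bn_remove[OF T(3)])
      show "\<forall>s\<in>S. \<forall>v\<in>K. \<forall>p\<in>dpaths A B s v. u \<notin> set p"
        proof (intro ballI)
        fix s v p assume "s \<in> S" "v \<in> K" "p \<in> dpaths A B s v"
        then show "u \<notin> set p" using lat_not_on_path[OF sem ul, of s p v] uS by blast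
      qed
    qed auto
    then have "min_bottleneck_size q l A B S K \<le> card (T - {u})" using mb_le T(1) by blast
    then show ?thesis using card_Diff1_less[OF finT True] by linarith
  next
    case uT: False
    show ?thesis
    proof (cases "x \<in> T")
      case True
      have "bottleneck A B S K (T - {x})"
    proof (rule bn_remove[OF T(3)])
      show "\<forall>s\<in>S. \<forall>v\<in>K. \<forall>p\<in>dpaths A B s v. x \<notin> set p"
      proof (intro ballI)
        fix s v p assume "s \<in> S" "v \<in> K" "p \<in> dpaths A B s v"
        then show "x \<notin> set p" using not_on_path[OF sem, of s x p] SP by blast
      qed
    qed auto
      then have "min_bottleneck_size q l A B S K \<le> card (T - {x})" using mb_le T(1) by blast
      then show ?thesis using card_Diff1_less[OF finT True] by linarith
    next
      case xT: False
      define D where "D = (Ch A B x \<union> Ch A B u) - {x}"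
      have DT: "D \<subseteq> T"
      proof
        fix c assume c: "c \<in> D"
        show "c \<in> T"
        proof (cases "c \<in> Ch A B u")
          case True
          then have "c \<in> K" using Ch_De[OF sem] K_def c D_def by blast
          moreover have "[u, c] \<in> dpaths A B u c" using True path2 by (auto simp: Ch_def)
          moreover have "\<forall>v\<in>K. \<forall>p\<in>dpaths A B u v. set p \<inter> T \<noteq> {}"
        using T(3) by (simp add: bottleneck_def)
      ultimately have "set [u, c] \<inter> T \<noteq> {}" by blast
          then show "c \<in> T" using uT by auto
        next
          case False
          then have cx: "c \<in> Ch A B x" "c \<noteq> x" using c D_def by auto
          then have exc: "edge A B x c" by (simp add: Ch_def)
          have "c \<in> De A B u" using De_trans[OF sem exu edge_De[OF sem exc]] .
          then have "c \<in> K" using cx K_def by blast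
          moreover have "[u, x, c] \<in> dpaths A B u c" using path_cons[OF exu path2[OF exc]] .
          moreover have "\<forall>v\<in>K. \<forall>p\<in>dpaths A B u v. set p \<inter> T \<noteq> {}"
            using T(3) by (simp add: bottleneck_def)
          ultimately have "set [u, x, c] \<inter> T \<noteq> {}" by blast
          then show "c \<in> T" using uT xT by auto
        qed
      qed
      have finD: "finite D" using finite_Ch[OF sem] by (simp add: D_def)
      have cD: "card D = card (Ch A B x \<union> Ch A B u) - 1"
        using x finite_Ch[OF sem] by (simp add: D_def card_Diff_singleton)
      have cDT: "card D \<le> card T" using finT DT card_mono by blast
      show ?thesis
      proof (rule ccontr)
        assume "\<not> ?thesis"
        then have eqs: "card S = card D" "card T = card D" using mbS cS cDT cD by linarith+
        have TD: "T = D" using card_subset_eq[OF finT DT] eqs(2) by simp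
        obtain h where h: "h \<in> S" "h \<in> latents l" "\<not> Ch A B h \<subseteq> Ch A B x \<union> Ch A B u"
          using nex eqs(1) cD by auto
        obtain c where c: "c \<in> Ch A B h" "c \<notin> Ch A B x \<union> Ch A B u" using h(3) by blast
        have "h \<notin> De A B x" using h(2) De_obs[OF sem] obs_not_lat by blast
        then have "Ch A B h \<subseteq> De A B x" using h(1) SP by (auto simp: possible_children_def)
        then have cDx: "c \<in> De A B x" using c by blast
        then have "c \<noteq> x" by (simp add: De_def)
        then have cK: "c \<in> K" using De_trans[OF sem exu cDx] K_def by blast
        have "[h, c] \<in> dpaths A B h c" using c path2 by (auto simp: Ch_def)
        moreover have "\<forall>v\<in>K. \<forall>p\<in>dpaths A B h v. set p \<inter> T \<noteq> {}"
        using T(3) h(1) by (simp add: bottleneck_def)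
      ultimately have "set [h, c] \<inter> T \<noteq> {}" using cK by blast
        moreover have "h \<notin> T" using TD D_def Ch_obs[OF sem] h(2) obs_not_lat by blast
        ultimately show False using c(2) TD D_def by auto
      qed
    qed
  qed
  show False
    by (rule span_contra[OF sem bf Svars u uS Kobs]) (use sp big T(2) K_def in auto)
qed

lemma part1:
  "sem_ur q l A B \<Longrightarrow> bottleneck_faithful q l A B \<Longrightarrow> semur_faithful q l A B"
  using part_a part_b1 part_b2 by (simp add: semur_faithful_def)



abbreviation Z :: "nat \<Rightarrow> nat \<Rightarrow> real" where "Z \<equiv> (\<lambda>_ _. 0)"

lemma edge0: "edge Z B u v \<longleftrightarrow> (\<exists>i j. u = H i \<and> v = X j \<and> B j i \<noteq> 0)"
  by (cases u; cases v) (auto simp: edge_def)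

lemma dp0_mem: "p \<in> dpaths Z B u v \<Longrightarrow> (p = [u] \<and> u = v) \<or> (p = [u, v] \<and> edge Z B u v)"
proof -
  assume p: "p \<in> dpaths Z B u v"
  obtain a rest where pa: "p = a # rest" using dp_ne[OF p] by (cases p) auto
  have a: "a = u" using dp_hd[OF p] pa by simp
  show ?thesis
  proof (cases rest)
    case Nil then show ?thesis using p pa a by (auto simp: dpaths_def)
  next
    case (Cons b rest')
    show ?thesis
    proof (cases rest')
      case Nil
      have "edge Z B a b" using dp_edge[OF p, of 0] pa Cons by simp
      then show ?thesis using p pa a Cons Nil by (auto simp: dpaths_def)
    next
      case (Cons c rest'')
      have "edge Z B a b" using dp_edge[OF p, of 0] pa \<open>rest = b # rest'\<close> by simp
      moreover have "edge Z B b c" using dp_edge[OF p, of 1] pa \<open>rest = b # rest'\<close> Cons by simp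
      ultimately show ?thesis by (auto simp: edge0)
    qed
  qed
qed

lemma dp0: "dpaths Z B u v = (if u = v then {[u]} else if edge Z B u v then {[u, v]} else {})"
proof -
  have nl: "\<not> edge Z B u u" by (auto simp: edge0)
  show ?thesis
    using dp0_mem[of _ B u v] path1[of u Z B] path2[of Z B u v] nl by auto
qed

lemma te0: "te Z B u v = (if u = v then 1 else weight Z B u v)"
proof (cases "u = v")
  case True then show ?thesis by (simp add: te_def dp0)
next
  case False
  show ?thesis
  proof (cases "edge Z B u v")
    case True then show ?thesis using False by (simp add: te_def dp0)
  next
    case ne: False then show ?thesis using False by (simp add: te_def dp0 edge_def)
  qed
qed

lemma De0: "De Z B u = Ch Z B u"
proof -
  have nl: "\<And>u. \<not> edge Z B u u" by (auto simp: edge0)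
  show ?thesis unfolding De_def Ch_def dp0 using nl by auto
qed

lemma ChX0: "Ch Z B (X j) = {}"
  by (auto simp: Ch_def edge0)

lemma not_span:
  assumes "v w \<noteq> 0" "\<forall>s\<in>S. f s w = 0"
  shows "\<not> in_span v S f"
  using assms by (auto simp: in_span_def)

lemma generic_faithful:
  assumes sem: "sem_ur q l Z B"
    and P: "\<forall>i k. i < l \<longrightarrow> k < l \<longrightarrow> i \<noteq> k \<longrightarrow> \<not> Ch Z B (H k) \<subseteq> Ch Z B (H i)"
    and Q: "\<forall>i<l. 2 \<le> card (Ch Z B (H i))"
  shows "semur_faithful q l Z B"
proof -
  have fa: "faithful_a q l Z B"
    unfolding faithful_a_def
  proof (intro ballI)
    fix u v assume "u \<in> vars q l" "v \<in> De Z B u"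
    then have "edge Z B u v" "u \<noteq> v" by (auto simp: De0 Ch_def edge0)
    then show "te Z B u v \<noteq> 0" by (simp add: te0 edge_def)
  qed
  have fb1: "faithful_b1 q l Z B"
    unfolding faithful_b1_def
  proof (intro ballI allI impI)
    fix u S
    assume u: "u \<in> vars q l" and SP: "S \<subseteq> possible_children l Z B u"
      and cS: "card S \<le> card (Ch Z B u)"
      and nex: "\<not> (card S = card (Ch Z B u) \<and> (\<forall>h\<in>S \<inter> latents l. Ch Z B h \<subseteq> Ch Z B u))"
    have finS: "finite S" using SP PC_vars[OF sem] finite_vars finite_subset by metis
    show "\<not> in_span (TC Z B u (De Z B u)) S (\<lambda>s. TC Z B s (De Z B u))"
    proof (cases u)
      case (X j)
      then have "S = {}" using cS finS by (simp add: ChX0)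
      then show ?thesis using nex X by (simp add: ChX0)
    next
      case (H i)
      have il: "i < l" using u H by (auto simp: vars_def)
      have SCh: "S \<subseteq> Ch Z B u"
      proof
        fix s assume s: "s \<in> S"
        show "s \<in> Ch Z B u"
        proof (rule ccontr)
          assume ns: "s \<notin> Ch Z B u"
          then have "s \<in> latents l" "s \<noteq> u" "Ch Z B s \<subseteq> De Z B u"
            using s SP by (auto simp: possible_children_def De0)
          then obtain k where k: "s = H k" "k < l" "k \<noteq> i" using H by (auto simp: latents_def)
          then show False using P il \<open>Ch Z B s \<subseteq> De Z B u\<close> H by (auto simp: De0)
        qed
      qed
      have lat: "S \<inter> latents l = {}" using SCh Ch_obs[OF sem] obs_not_lat by blast
      have "S \<noteq> Ch Z B u" using nex lat by auto
      then obtain w where w: "w \<in> Ch Z B u" "w \<notin> S" using SCh by blast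
      have uw: "u \<noteq> w" "edge Z B u w" using w by (auto simp: Ch_def edge0)
      show ?thesis
      proof (rule not_span)
        show "TC Z B u (De Z B u) w \<noteq> 0" using w uw by (simp add: TC_def De0 te0 edge_def)
        show "\<forall>s\<in>S. TC Z B s (De Z B u) w = 0"
        proof
          fix s assume s: "s \<in> S"
          then have "s \<noteq> w" using w by auto
          moreover have "\<not> edge Z B s w" using s SCh by (auto simp: Ch_def edge0)
          ultimately show "TC Z B s (De Z B u) w = 0" by (simp add: TC_def te0 edge_def)
        qed
      qed
    qed
  qed
  have fb2: "faithful_b2 q l Z B"
    unfolding faithful_b2_def
  proof (intro ballI allI impI)
    fix u x S
    assume ul: "u \<in> latents l" and x: "x \<in> Ch Z B u" and SP: "S \<subseteq> possible_children l Z B x"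
      and cS: "card S \<le> card (Ch Z B x \<union> Ch Z B u) - 1"
      and nex: "\<not> (card S = card (Ch Z B x \<union> Ch Z B u) - 1 \<and>
             (\<forall>h\<in>S \<inter> latents l. Ch Z B h \<subseteq> Ch Z B x \<union> Ch Z B u))"
    obtain i where i: "u = H i" "i < l" using ul by (auto simp: latents_def)
    obtain j where j: "x = X j" using x i by (auto simp: Ch_def edge0)
    have S0: "S = {}"
    proof -
      have "possible_children l Z B x = {}"
      proof -
        have "\<And>h. h \<in> latents l \<Longrightarrow> Ch Z B h \<noteq> {}"
          using Q by (fastforce simp: latents_def)
        then show ?thesis by (auto simp: possible_children_def De0 j ChX0)
      qed
      then show ?thesis using SP by blast
    qed
    have c2: "2 \<le> card (Ch Z B u)" using Q i by simp
    then have fin: "finite (Ch Z B u)" by (metis card.infinite not_numeral_le_zero)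
    have "\<exists>w. w \<in> Ch Z B u \<and> w \<noteq> x"
    proof (rule ccontr)
      assume "\<not> ?thesis"
      then have "Ch Z B u \<subseteq> {x}" by auto
      then have "card (Ch Z B u) \<le> card {x}" by (intro card_mono) auto
      then have "card (Ch Z B u) \<le> 1" by simp
      then show False using c2 by simp
    qed
    then obtain w where w: "w \<in> Ch Z B u" "w \<noteq> x" by blast
    have uw: "u \<noteq> w" "edge Z B u w" using w i by (auto simp: Ch_def edge0)
    show "\<not> in_span (TC Z B u (De Z B u - {x})) S (\<lambda>s. TC Z B s (De Z B u - {x}))"
    proof (rule not_span)
      show "TC Z B u (De Z B u - {x}) w \<noteq> 0" using w uw by (simp add: TC_def De0 te0 edge_def)
      show "\<forall>s\<in>S. TC Z B s (De Z B u - {x}) w = 0" using S0 by simp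
    qed
  qed
  show ?thesis using fa fb1 fb2 by (simp add: semur_faithful_def)
qed



definition B0 :: "nat \<Rightarrow> nat \<Rightarrow> real" where
  "B0 j i = (if j = 0 \<and> i = 1 then 1 else if j = 0 \<and> i = 2 then -1
     else if j = 1 \<and> i = 0 then 2 else if j = 1 \<and> i = 1 then 2
     else if j = 2 \<and> i = 0 then 3 else if j = 2 \<and> i = 1 then 3
     else if j = 3 \<and> i = 0 then 4 else if j = 3 \<and> i = 2 then 4 else 0)"

lemma sem0: "sem_ur 4 3 Z B0"
  by (auto simp: sem_ur_def B0_def split: if_splits)

lemma ChH0: "Ch Z B0 (H 0) = {X 1, X 2, X 3}"
  by (auto simp: Ch_def edge0 B0_def split: if_splits)
lemma ChH1: "Ch Z B0 (H 1) = {X 0, X 1, X 2}"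
  by (auto simp: Ch_def edge0 B0_def split: if_splits)
lemma ChH1': "Ch Z B0 (H (Suc 0)) = {X 0, X 1, X 2}"
  using ChH1 by simp
lemma ChH2: "Ch Z B0 (H 2) = {X 0, X 3}"
  by (auto simp: Ch_def edge0 B0_def split: if_splits)

lemma lt3: "(i::nat) < 3 \<longleftrightarrow> i = 0 \<or> i = 1 \<or> i = 2" by auto
lemma lt4: "(i::nat) < 4 \<longleftrightarrow> i = 0 \<or> i = 1 \<or> i = 2 \<or> i = 3" by auto

lemma faith0: "semur_faithful 4 3 Z B0"
proof (rule generic_faithful[OF sem0])
  show "\<forall>i k. i < 3 \<longrightarrow> k < 3 \<longrightarrow> i \<noteq> k \<longrightarrow> \<not> Ch Z B0 (H k) \<subseteq> Ch Z B0 (H i)"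
    unfolding lt3 by (auto simp: ChH0 ChH1 ChH1' ChH2)
  show "\<forall>i<3. 2 \<le> card (Ch Z B0 (H i))"
    unfolding lt3 by (auto simp: ChH0 ChH1 ChH1' ChH2)
qed

lemma lat3: "latents 3 = {H 0, H 1, H 2}"
  unfolding latents_def lt3 by auto
lemma obs4: "observed 4 = {X 0, X 1, X 2, X 3}"
  unfolding observed_def lt4 by auto

lemma not_bf0: "\<not> bottleneck_faithful 4 3 Z B0"
proof
  assume bf: "bottleneck_faithful 4 3 Z B0"
  define J where "J = latents 3"
  define K where "K = observed 4"
  have JV: "J \<subseteq> vars 4 3" using lat_vars J_def by blast
  have KO: "K \<subseteq> observed 4" by (simp add: K_def)
  have finJ: "finite J" by (simp add: J_def lat3)
  have cJ: "card J = 3" by (simp add: J_def lat3)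
  have dep: "\<not> cols_independent Z B0 J K"
  proof
    assume ind: "cols_independent Z B0 J K"
    define c where "c = (\<lambda>v::var. if v = H 0 then (1::real) else -1)"
    have "\<forall>w\<in>K. (\<Sum>u\<in>J. c u * te Z B0 u w) = 0"
      unfolding K_def obs4 J_def lat3 by (simp add: c_def te0 B0_def)
    then have "\<forall>u\<in>J. c u = 0" using ind unfolding cols_independent_def by blast
    then show False by (simp add: J_def lat3 c_def)
  qed
  have r: "rank_sub Z B0 J K \<le> 2"
    unfolding rank_sub_def
  proof (subst Max_le_iff[OF rank_set_fin[OF finJ]], intro ballI)
    fix n assume "n \<in> {card J' |J'. J' \<subseteq> J \<and> cols_independent Z B0 J' K}"
    then obtain J' where J': "n = card J'" "J' \<subseteq> J" "cols_independent Z B0 J' K" by blast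
    show "n \<le> 2"
    proof (rule ccontr)
      assume "\<not> n \<le> 2"
      then have "card J' \<ge> card J" using J'(1) cJ by simp
      then have "J' = J" using card_seteq[OF finJ J'(2)] by simp
      then show False using J'(3) dep by simp
    qed
  qed
  obtain T where T: "T \<subseteq> vars 4 3" "card T = min_bottleneck_size 4 3 Z B0 J K"
      "bottleneck Z B0 J K T"
    using mb_attained[OF JV] by blast
  have finT: "finite T" using T(1) finite_vars finite_subset by blast
  have hit: "\<And>i j. H i \<in> J \<Longrightarrow> X j \<in> K \<Longrightarrow> B0 j i \<noteq> 0 \<Longrightarrow> H i \<in> T \<or> X j \<in> T"
  proof -
    fix i j assume "H i \<in> J" "X j \<in> K" "B0 j i \<noteq> 0"
    moreover have "[H i, X j] \<in> dpaths Z B0 (H i) (X j)" using \<open>B0 j i \<noteq> 0\<close> by (intro path2) (simp add: edge0)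
    ultimately have "set [H i, X j] \<inter> T \<noteq> {}" using T(3) unfolding bottleneck_def by blast
    then show "H i \<in> T \<or> X j \<in> T" by auto
  qed
  have inJ: "H 0 \<in> J" "H 1 \<in> J" "H 2 \<in> J" by (auto simp: J_def lat3)
  have inK: "X 0 \<in> K" "X 1 \<in> K" "X 3 \<in> K" by (auto simp: K_def obs4)
  obtain a where a: "a \<in> T" "a \<in> {H 0, X 1}" using hit[OF inJ(1) inK(2)] by (auto simp: B0_def)
  obtain b where b: "b \<in> T" "b \<in> {H 1, X 0}" using hit[OF inJ(2) inK(1)] by (auto simp: B0_def)
  obtain d where d: "d \<in> T" "d \<in> {H 2, X 3}" using hit[OF inJ(3) inK(3)] by (auto simp: B0_def)
  have "card {a, b, d} = 3" using a(2) b(2) d(2) by auto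
  moreover have "card {a, b, d} \<le> card T" using a b d finT by (intro card_mono) auto
  ultimately have "3 \<le> min_bottleneck_size 4 3 Z B0 J K" using T(2) by simp
  moreover have "rank_sub Z B0 J K = min_bottleneck_size 4 3 Z B0 J K" using bn_faith[OF bf JV KO] .
  ultimately show False using r by simp
qed

lemma part2: "\<exists>q l A B. sem_ur q l A B \<and> semur_faithful q l A B \<and> \<not> bottleneck_faithful q l A B"
  using sem0 faith0 not_bf0 by blast


theorem mainTheorem14:
  shows "(\<forall>q l A B. sem_ur q l A B \<longrightarrow> bottleneck_faithful q l A B \<longrightarrow> semur_faithful q l A B)
     \<and> (\<exists>q l A B. sem_ur q l A B \<and> semur_faithful q l A B \<and> \<not> bottleneck_faithful q l A B)"
  using part1 part2 by blast

end
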